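(* Let $c\in\mathbb{R}\setminus\{0\}$ and let $\boldsymbol\eta_c:\mathbb{R}^2\to\mathbb{R}^2$ be $$\boldsymbol\eta_c(u,v)=\bigl(u^2-v^2,\ -2uv+4cv\bigr).$$ Let $\mathbf y=(s_1,s_2)$ be a point in the four-image region of $\boldsymbol\eta_c$, i.e. the equation $\boldsymbol\eta_c(\mathbf x)=\mathbf y$ has exactly four distinct solutions $\mathbf x_1,\dots,\mathbf x_4\in\mathbb{R}^2$, each with $\det(\mathrm{Jac}\,\boldsymbol\eta_c)(\mathbf x_i)\neq 0$. Then the signed magnifications $\mu_i=1/\det(\mathrm{Jac}\,\boldsymbol\eta_c)(\mathbf x_i)$ satisfy $$\mu_1+\mu_2+\mu_3+\mu_4=0.$$ Explicitly, $\det(\mathrm{Jac}\,\boldsymbol\eta_c)(u,v)=8cu-4(u^2+v^2)$, so $\sum_{i=1}^4 \frac{1}{8cu_i-4(u_i^2+v_i^2)}=0$ where $\mathbf x_i=(u_i,v_i)$.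
   Context: This map is the universal quantitative form of a one-parameter family of gravitational lensing maps near an elliptic umbilic caustic. The four-image region is the bounded region enclosed by the caustic curve $s_1=2c^2\cos\phi(1+\cos\phi)$, $s_2=2c^2\sin\phi(1-\cos\phi)$, $\phi\in[0,2\pi)$; sources in its interior have exactly four preimages. *)

theory Defs
  imports "HOL-Analysis.Analysis"
begin

definition eta :: "real \<Rightarrow> real \<times> real \<Rightarrow> real \<times> real" where
  "eta c x = (fst x ^ 2 - snd x ^ 2, - 2 * fst x * snd x + 4 * c * snd x)"

definition jac_det :: "(real \<times> real \<Rightarrow> real \<times> real) \<Rightarrow> real \<times> real \<Rightarrow> real" where
  "jac_det f x =
     deriv (\<lambda>u. fst (f (u, snd x))) (fst x) * deriv (\<lambda>v. snd (f (fst x, v))) (snd x)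
   - deriv (\<lambda>v. fst (f (fst x, v))) (snd x) * deriv (\<lambda>u. snd (f (u, snd x))) (fst x)"

end

theory Submission imports Defs begin

lemma jac_eta: "jac_det (eta c) x = 8*c*fst x - 4*(fst x^2 + snd x^2)"
proof -
  obtain a b where x: "x = (a,b)" by (cases x)
  have d1: "deriv (\<lambda>u. u^2 - b^2) a = 2*a"
    by (rule DERIV_imp_deriv) (auto intro!: derivative_eq_intros)
  have d2: "deriv (\<lambda>v. - 2 * a * v + 4 * c * v) b = -2*a + 4*c"
    by (rule DERIV_imp_deriv) (auto intro!: derivative_eq_intros)
  have d3: "deriv (\<lambda>v. a^2 - v^2) b = -2*b"
    by (rule DERIV_imp_deriv) (auto intro!: derivative_eq_intros)
  have d4: "deriv (\<lambda>u. - 2 * u * b + 4 * c * b) a = -2*b"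
    by (rule DERIV_imp_deriv) (auto intro!: derivative_eq_intros)
  show ?thesis unfolding jac_det_def eta_def x fst_conv snd_conv d1 d2 d3 d4
    by (simp add: algebra_simps power2_eq_square)
qed

lemma lagr:
  fixes x y z t c :: real
  assumes "x\<noteq>y" "x\<noteq>z" "x\<noteq>t" "y\<noteq>z" "y\<noteq>t" "z\<noteq>t"
  shows "(4*c-2*x)/(4*((x-y)*(x-z)*(x-t))) + (4*c-2*y)/(4*((y-x)*(y-z)*(y-t)))
       + (4*c-2*z)/(4*((z-x)*(z-y)*(z-t))) + (4*c-2*t)/(4*((t-x)*(t-y)*(t-z))) = 0"
proof -
  have n: "x-y\<noteq>0" "x-z\<noteq>0" "x-t\<noteq>0" "y-z\<noteq>0" "y-t\<noteq>0" "z-t\<noteq>0"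
       "y-x\<noteq>0" "z-x\<noteq>0" "t-x\<noteq>0" "z-y\<noteq>0" "t-y\<noteq>0" "t-z\<noteq>0" using assms by auto
  define V where "V = (x-y)*(x-z)*(x-t)*(y-z)*(y-t)*(z-t)"
  have V0: "4*V \<noteq> 0" unfolding V_def using n by simp
  have t1: "(4*c-2*x)/(4*((x-y)*(x-z)*(x-t))) * (4*V) = (4*c-2*x)*((y-z)*(y-t)*(z-t))"
  proof -
    have "4*V = (4*((x-y)*(x-z)*(x-t))) * ((y-z)*(y-t)*(z-t))" unfolding V_def by algebra
    then show ?thesis using n by simp
  qed
  have t2: "(4*c-2*y)/(4*((y-x)*(y-z)*(y-t))) * (4*V) = - (4*c-2*y)*((x-z)*(x-t)*(z-t))"
  proof -
    have "4*V = (4*((y-x)*(y-z)*(y-t))) * (- ((x-z)*(x-t)*(z-t)))" unfolding V_def by algebra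
    then show ?thesis using n by simp (simp add: algebra_simps)
  qed
  have t3: "(4*c-2*z)/(4*((z-x)*(z-y)*(z-t))) * (4*V) = (4*c-2*z)*((x-y)*(x-t)*(y-t))"
  proof -
    have "4*V = (4*((z-x)*(z-y)*(z-t))) * ((x-y)*(x-t)*(y-t))" unfolding V_def by algebra
    then show ?thesis using n by simp
  qed
  have t4: "(4*c-2*t)/(4*((t-x)*(t-y)*(t-z))) * (4*V) = - (4*c-2*t)*((x-y)*(x-z)*(y-z))"
  proof -
    have "4*V = (4*((t-x)*(t-y)*(t-z))) * (- ((x-y)*(x-z)*(y-z)))" unfolding V_def by algebra
    then show ?thesis using n by simp (simp add: algebra_simps)
  qed
  have "((4*c-2*x)/(4*((x-y)*(x-z)*(x-t))) + (4*c-2*y)/(4*((y-x)*(y-z)*(y-t)))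
       + (4*c-2*z)/(4*((z-x)*(z-y)*(z-t))) + (4*c-2*t)/(4*((t-x)*(t-y)*(t-z)))) * (4*V) = 0"
    unfolding distrib_right t1 t2 t3 t4 by algebra
  with V0 show ?thesis by simp
qed

lemma quartic:
  fixes ka kb kc kd x y z t :: real
  assumes "x\<noteq>y" "x\<noteq>z" "x\<noteq>t" "y\<noteq>z" "y\<noteq>t" "z\<noteq>t"
  and P: "\<And>u. P u = 4*u^4 + ka*u^3 + kb*u^2 + kc*u + kd"
  and "P x = 0" "P y = 0" "P z = 0" "P t = 0"
  shows "16*x^3 + 3*ka*x^2 + 2*kb*x + kc = 4*((x-y)*(x-z)*(x-t))"
proof -
  define D where "D p q = 4*(p^3+p^2*q+p*q^2+q^3) + ka*(p^2+p*q+q^2) + kb*(p+q) + kc" for p q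
  have Dz: "D p q = 0" if "P p = 0" "P q = 0" "p \<noteq> q" for p q
  proof -
    have "P p - P q = (p-q) * D p q" unfolding P D_def by algebra
    with that show ?thesis by simp
  qed
  define E where "E p q r = 4*(p^2+q^2+r^2+p*q+p*r+q*r) + ka*(p+q+r) + kb" for p q r
  have Ez: "E p q r = 0" if "D p q = 0" "D p r = 0" "q \<noteq> r" for p q r
  proof -
    have "D p q - D p r = (q-r) * E p q r" unfolding E_def D_def by algebra
    with that show ?thesis by simp
  qed
  have F: "4*(x+y+z+t) + ka = 0"
  proof -
    have e1: "E x y z = 0" by (rule Ez; (rule Dz)?) (use assms in auto)
    have e2: "E x y t = 0" by (rule Ez; (rule Dz)?) (use assms in auto)
    have "E x y z - E x y t = (z-t) * (4*(x+y+z+t) + ka)" unfolding E_def by algebra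
    with e1 e2 assms show ?thesis by simp
  qed
  have e1: "E x y z = 0" by (rule Ez; (rule Dz)?) (use assms in auto)
  have d1: "D x y = 0" by (rule Dz) (use assms in auto)
  have p1: "P x = 0" by fact
  show ?thesis using F e1 d1 p1 unfolding E_def D_def P by algebra
qed


definition PP :: "real \<Rightarrow> real \<Rightarrow> real \<Rightarrow> real \<Rightarrow> real" where
  "PP c sa sb u = 4*u^4 + (-16*c)*u^3 + (16*c^2-4* sa)*u^2 + (16*c* sa)*u + (-16*c^2* sa - sb^2)"

lemma PP_root:
  fixes u v c sa sb :: real
  assumes "u^2 - v^2 = sa" "-2*u* v + 4*c* v = sb"
  shows "PP c sa sb u = 0"
proof -
  have "PP c sa sb u = (u^2-sa)*(4*c-2*u)^2 - sb^2" unfolding PP_def by algebra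
  also have "\<dots> = 0"
  proof -
    have h1: "sa = u^2 - v^2" "sb = v * (4 * c - 2 * u)" using assms by (simp_all add: algebra_simps)
    show ?thesis unfolding h1 by algebra
  qed
  finally show ?thesis .
qed

lemma term_eq:
  fixes u v y z t c sa sb :: real
  assumes "sb \<noteq> 0" "u^2 - v^2 = sa" "-2*u* v + 4*c* v = sb"
    and J: "8*c*u - 4*(u^2+v^2) \<noteq> 0"
    and d: "u\<noteq>y" "u\<noteq>z" "u\<noteq>t" "y\<noteq>z" "y\<noteq>t" "z\<noteq>t"
    and r: "PP c sa sb y = 0" "PP c sa sb z = 0" "PP c sa sb t = 0"
  shows "1 / (8*c*u - 4*(u^2+v^2)) = (4*c-2*u)/(4*((u-y)*(u-z)*(u-t)))"
proof -
  have w: "4*c-2*u \<noteq> 0"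
  proof
    assume "4*c-2*u = 0"
    then have "-2*u* v + 4*c* v = 0" by algebra
    with assms(1,3) show False by simp
  qed
  have ru: "PP c sa sb u = 0" by (rule PP_root[OF assms(2,3)])
  have q: "16*u^3 + 3*(-16*c)*u^2 + 2*(16*c^2-4* sa)*u + (16*c* sa) = 4*((u-y)*(u-z)*(u-t))"
    by (rule quartic[where P = "PP c sa sb" and kd = "-16*c^2* sa - sb^2"])
       (use d r ru in \<open>auto simp: PP_def\<close>)
  have "16*u^3 + 3*(-16*c)*u^2 + 2*(16*c^2-4* sa)*u + (16*c* sa) = (4*c-2*u)*(8*c*u - 4*(u^2+v^2))"
  proof -
    have h: "sa = u^2 - v^2" using assms(2) by simp
    show ?thesis unfolding h by algebra
  qed
  with q have e: "(4*c-2*u)*(8*c*u - 4*(u^2+v^2)) = 4*((u-y)*(u-z)*(u-t))" by simp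
  show ?thesis unfolding e[symmetric] using w J by simp
qed


lemma two_pts_sum:
  fixes c a :: real
  assumes "a \<noteq> 0" "8 * c * a - 4 * (a^2 + 0^2) \<noteq> 0" "8 * c * (-a) - 4 * ((-a)^2 + 0^2) \<noteq> 0"
    and "b \<noteq> 0" "b^2 = 4 * c^2 - a^2"
  shows "1 / (8 * c * a - 4 * (a^2 + 0^2)) + 1 / (8 * c * (-a) - 4 * ((-a)^2 + 0^2))
     + (1 / (8 * c * (2 * c) - 4 * ((2 * c)^2 + b^2)) + 1 / (8 * c * (2 * c) - 4 * ((2 * c)^2 + (-b)^2))) = 0"
proof -
  have e: "8 * c * (2 * c) - 4 * ((2 * c)^2 + b^2) = - 4 * b^2" by algebra
  have e2: "8 * c * (2 * c) - 4 * ((2 * c)^2 + (-b)^2) = - 4 * b^2" by algebra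
  have A: "8 * c * a - 4 * a^2 \<noteq> 0" "-8 * c * a - 4 * a^2 \<noteq> 0" using assms(2,3) by simp_all
  have pr: "(8 * c * a - 4 * a^2) * (-8 * c * a - 4 * a^2) = - (16 * a^2 * b^2)"
    unfolding assms(5) by algebra
  have "1 / (8 * c * a - 4 * a^2) + 1 / (-8 * c * a - 4 * a^2) = (- 8 * a^2) / ((8 * c * a - 4 * a^2) * (-8 * c * a - 4 * a^2))"
    using A by (simp add: field_simps)
  also have "\<dots> = (- 8 * a^2) / (- (16 * a^2 * b^2))" unfolding pr ..
  finally have s: "1 / (8 * c * a - 4 * a^2) + 1 / (-8 * c * a - 4 * a^2) = 1 / (2 * b^2)"
    using assms(1,4) by (simp add: field_simps)
  show ?thesis unfolding e e2 using s assms(1,4) by (simp add: field_simps)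
qed

theorem theorem1:
  fixes c s1 s2 :: real
  assumes "c \<noteq> 0"
    and "card {x. eta c x = (s1, s2)} = 4"
    and "\<forall>x \<in> {x. eta c x = (s1, s2)}. jac_det (eta c) x \<noteq> 0"
  shows "(\<Sum>x \<in> {x. eta c x = (s1, s2)}. 1 / jac_det (eta c) x) = 0"
proof -
  define S where "S = {x. eta c x = (s1, s2)}"
  have memS: "x \<in> S \<longleftrightarrow> fst x ^ 2 - snd x ^ 2 = s1 \<and> - 2 * fst x * snd x + 4 * c * snd x = s2" for x
    unfolding S_def eta_def by auto
  have cS: "card S = 4" using assms(2) S_def by simp
  have fin: "finite S" using cS by (metis card.infinite zero_neq_numeral)
  have Jn: "8 * c * fst x - 4 * (fst x ^ 2 + snd x ^ 2) \<noteq> 0" if "x \<in> S" for x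
  proof -
    have "jac_det (eta c) x \<noteq> 0" using assms(3) that S_def by blast
    then show ?thesis by (simp add: jac_eta)
  qed
  have goal: "(\<Sum>x \<in> S. 1 / (8 * c * fst x - 4 * (fst x ^ 2 + snd x ^ 2))) = 0"
  proof (cases "s2 = 0")
    case True
    define A where "A = {x\<in>S. snd x = 0}"
    define B where "B = {x\<in>S. snd x \<noteq> 0}"
    define a where "a = sqrt s1"
    define b where "b = sqrt (4 * c^2 - s1)"
    have AB: "S = A \<union> B" "A \<inter> B = {}" unfolding A_def B_def by auto
    have Asub: "A \<subseteq> {(a,0), (-a,0)}"
    proof
      fix x assume "x \<in> A"
      then have x: "fst x ^ 2 = s1" "snd x = 0" unfolding A_def using memS by auto
      then have "s1 \<ge> 0" by (metis zero_le_power2)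
      then have "fst x ^ 2 = a ^ 2" using x a_def by simp
      then have "fst x = a \<or> fst x = - a" by (simp add: power2_eq_iff)
      then show "x \<in> {(a,0), (-a,0)}" using x by (cases x) auto
    qed
    have Bsub: "B \<subseteq> {(2 * c, b), (2 * c, -b)}"
    proof
      fix x assume "x \<in> B"
      then have x: "fst x ^ 2 - snd x ^ 2 = s1" "snd x * (4 * c - 2 * fst x) = 0" "snd x \<noteq> 0"
        unfolding B_def using memS True by (auto simp: algebra_simps)
      then have u: "fst x = 2 * c" by simp
      then have v: "snd x ^ 2 = 4 * c^2 - s1" using x(1) by (simp add: algebra_simps power2_eq_square)
      then have "4 * c^2 - s1 \<ge> 0" by (metis zero_le_power2)
      then have "snd x ^ 2 = b ^ 2" using v b_def by simp
      then have "snd x = b \<or> snd x = - b" by (simp add: power2_eq_iff)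
      then show "x \<in> {(2 * c, b), (2 * c, -b)}" using u by (cases x) auto
    qed
    have finA: "finite A" "finite B" using fin AB by auto
    have c2: "card {p, q} \<le> 2" for p q :: "real \<times> real" by (auto simp: card_insert_if)
    have cA: "card A \<le> 2" using card_mono[OF _ Asub] c2 by (meson finite.emptyI finite.insertI le_trans)
    have cB: "card B \<le> 2" using card_mono[OF _ Bsub] c2 by (meson finite.emptyI finite.insertI le_trans)
    have "card A + card B = 4" using card_Un_disjoint[OF finA AB(2)] AB(1) cS by simp
    then have cA2: "card A = 2" and cB2: "card B = 2" using cA cB by auto
    have Aeq: "A = {(a,0), (-a,0)}" by (rule card_seteq) (use Asub cA2 c2 in auto)
    have Beq: "B = {(2 * c, b), (2 * c, -b)}" by (rule card_seteq) (use Bsub cB2 c2 in auto)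
    have an: "a \<noteq> 0" using cA2 unfolding Aeq by (auto simp: card_insert_if)
    have bn: "b \<noteq> 0" using cB2 unfolding Beq by (auto simp: card_insert_if)
    have inS: "(a,0) \<in> S" "(-a,0) \<in> S" "(2 * c, b) \<in> S" "(2 * c, -b) \<in> S"
      using Aeq Beq AB by auto
    have bb: "b^2 = 4 * c^2 - a^2" using inS(1,3) memS by (auto simp: algebra_simps)
    have "(\<Sum>x \<in> S. 1 / (8 * c * fst x - 4 * (fst x ^ 2 + snd x ^ 2)))
        = (\<Sum>x \<in> A. 1 / (8 * c * fst x - 4 * (fst x ^ 2 + snd x ^ 2)))
        + (\<Sum>x \<in> B. 1 / (8 * c * fst x - 4 * (fst x ^ 2 + snd x ^ 2)))"
      unfolding AB(1) by (rule sum.union_disjoint) (use finA AB in auto)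
    also have "\<dots> = 0"
      unfolding Aeq Beq using an bn
      by (simp only: sum.insert finite.emptyI finite.insertI insert_iff empty_iff prod.inject
            sum.empty add_0_right fst_conv snd_conv neg_equal_zero simp_thms minus_equation_iff)
         (rule two_pts_sum[OF an _ _ bn bb]; use Jn[OF inS(1)] Jn[OF inS(2)] in simp)
    finally show ?thesis .
  next
    case False
    have wv: "snd x = s2 / (4 * c - 2 * fst x) \<and> 4 * c - 2 * fst x \<noteq> 0" if "x \<in> S" for x
    proof -
      have h: "snd x * (4 * c - 2 * fst x) = s2" using memS that by (simp add: algebra_simps)
      then have "4 * c - 2 * fst x \<noteq> 0" using False by auto
      with h show ?thesis by (simp add: field_simps)
    qed
    have injf: "x = y" if "x \<in> S" "y \<in> S" "fst x = fst y" for x y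
      using wv[OF that(1)] wv[OF that(2)] that(3) by (simp add: prod_eq_iff)
    have root: "PP c s1 s2 (fst x) = 0" if "x \<in> S" for x
      using memS that by (intro PP_root[of _ "snd x"]) auto
    have "card S = Suc 3" using cS by simp
    from card_eq_SucD[OF this] obtain p1 R where R: "S = insert p1 R" "p1 \<notin> R" "card R = 3" by blast
    from R(3) obtain p2 p3 p4 where R3: "R = {p2, p3, p4}" "p2 \<noteq> p3" "p3 \<noteq> p4" "p2 \<noteq> p4"
      unfolding card_3_iff by blast
    have Seq: "S = {p1, p2, p3, p4}" using R R3 by simp
    have inS: "p1 \<in> S" "p2 \<in> S" "p3 \<in> S" "p4 \<in> S" using Seq by auto
    have dp: "p1 \<noteq> p2" "p1 \<noteq> p3" "p1 \<noteq> p4" using R R3 by auto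
    have du: "fst pi \<noteq> fst pj" if "pi \<in> S" "pj \<in> S" "pi \<noteq> pj" for pi pj
      using injf that by blast
    note d = du[OF inS(1) inS(2) dp(1)] du[OF inS(1) inS(3) dp(2)] du[OF inS(1) inS(4) dp(3)]
             du[OF inS(2) inS(3) R3(2)] du[OF inS(2) inS(4) R3(4)] du[OF inS(3) inS(4) R3(3)]
    have mS: "fst p ^ 2 - snd p ^ 2 = s1" "- 2 * fst p * snd p + 4 * c * snd p = s2" if "p \<in> S" for p
      using memS that by auto
    have T1: "1 / (8 * c * fst p1 - 4 * (fst p1 ^ 2 + snd p1 ^ 2)) = (4 * c - 2 * fst p1) / (4 * ((fst p1 - fst p2) * (fst p1 - fst p3) * (fst p1 - fst p4)))"
      by (rule term_eq[OF False mS(1)[OF inS(1)] mS(2)[OF inS(1)] Jn[OF inS(1)]])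
         (use d root inS in auto)
    have T2: "1 / (8 * c * fst p2 - 4 * (fst p2 ^ 2 + snd p2 ^ 2)) = (4 * c - 2 * fst p2) / (4 * ((fst p2 - fst p1) * (fst p2 - fst p3) * (fst p2 - fst p4)))"
      by (rule term_eq[OF False mS(1)[OF inS(2)] mS(2)[OF inS(2)] Jn[OF inS(2)]])
         (use d root inS in auto)
    have T3: "1 / (8 * c * fst p3 - 4 * (fst p3 ^ 2 + snd p3 ^ 2)) = (4 * c - 2 * fst p3) / (4 * ((fst p3 - fst p1) * (fst p3 - fst p2) * (fst p3 - fst p4)))"
      by (rule term_eq[OF False mS(1)[OF inS(3)] mS(2)[OF inS(3)] Jn[OF inS(3)]])
         (use d root inS in auto)
    have T4: "1 / (8 * c * fst p4 - 4 * (fst p4 ^ 2 + snd p4 ^ 2)) = (4 * c - 2 * fst p4) / (4 * ((fst p4 - fst p1) * (fst p4 - fst p2) * (fst p4 - fst p3)))"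
      by (rule term_eq[OF False mS(1)[OF inS(4)] mS(2)[OF inS(4)] Jn[OF inS(4)]])
         (use d root inS in auto)
    have "(\<Sum>x \<in> S. 1 / (8 * c * fst x - 4 * (fst x ^ 2 + snd x ^ 2)))
      = 1 / (8 * c * fst p1 - 4 * (fst p1 ^ 2 + snd p1 ^ 2)) + (1 / (8 * c * fst p2 - 4 * (fst p2 ^ 2 + snd p2 ^ 2))
      + (1 / (8 * c * fst p3 - 4 * (fst p3 ^ 2 + snd p3 ^ 2)) + 1 / (8 * c * fst p4 - 4 * (fst p4 ^ 2 + snd p4 ^ 2))))"
      unfolding Seq using dp R3 by simp
    also have "\<dots> = 0" unfolding T1 T2 T3 T4 using lagr[OF d, of c] by (simp add: add.assoc)
    finally show ?thesis .
  qed
  show ?thesis using goal unfolding S_def[symmetric] by (simp add: jac_eta)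
qed

end
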